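(* Let $X,Y$ be compact metric spaces, $\epsilon\ge0$, and $X_\epsilon, Y_\epsilon$ finite $\epsilon$-nets of $X$ and $Y$. Let $f:X_\epsilon\to Y_\epsilon$ and $g:Y_\epsilon\to X_\epsilon$ satisfy $\frac12\max\{\operatorname{dis}(f),\operatorname{dis}(g)\}=\widehat{d}_{\mathrm{GH}}(X_\epsilon,Y_\epsilon)$. Define subsets $X_k\subseteq X_\epsilon$ by $X_0=X_\epsilon$, $X_1=g(Y_\epsilon)$, $X_k=(g\circ f)(X_{k-2})$ for $k>1$ (with the restricted metric). Let $\delta\ge0$. If $d_{\mathrm{GH}}(X_k,X_{k+1})\le\delta$ for some $k\ge0$, then $d_{\mathrm{GH}}(X,Y)\le(2k+1)\widehat{d}_{\mathrm{GH}}(X,Y)+(2k+2)\epsilon+\delta$.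
   Context: An $\epsilon$-net of $X$ is a subset such that every point of $X$ is within distance $\le\epsilon$ of it. For $f:X\to Y$, $\operatorname{dis}(f)=\sup_{x,x'}|d_X(x,x')-d_Y(f(x),f(x'))|$; $\operatorname{codis}(f,g)=\sup_{x,y}|d_X(x,g(y))-d_Y(f(x),y)|$. $d_{\mathrm{GH}}$ is the Gromov--Hausdorff distance, equal to $\frac12\inf_{f,g}\max\{\operatorname{dis}(f),\operatorname{dis}(g),\operatorname{codis}(f,g)\}$; $\widehat{d}_{\mathrm{GH}}(X,Y)=\frac12\max\{\inf_{f:X\to Y}\operatorname{dis}(f),\inf_{g:Y\to X}\operatorname{dis}(g)\}$. *)

theory Defs
  imports "HOL-Analysis.Analysis"
begin

text \<open>Metric spaces are modelled as subsets of metric_space types, with the restricted metric.\<close>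

definition is_eps_net :: "real \<Rightarrow> 'a::metric_space set \<Rightarrow> 'a set \<Rightarrow> bool" where
  "is_eps_net \<epsilon> X N \<longleftrightarrow> N \<subseteq> X \<and> (\<forall>x\<in>X. \<exists>n\<in>N. dist x n \<le> \<epsilon>)"

definition dis :: "('a::metric_space \<Rightarrow> 'b::metric_space) \<Rightarrow> 'a set \<Rightarrow> real" where
  "dis f X = (SUP p\<in>X \<times> X. \<bar>dist (fst p) (snd p) - dist (f (fst p)) (f (snd p))\<bar>)"

definition codis :: "('a::metric_space \<Rightarrow> 'b::metric_space) \<Rightarrow> ('b \<Rightarrow> 'a) \<Rightarrow> 'a set \<Rightarrow> 'b set \<Rightarrow> real" where
  "codis f g X Y = (SUP p\<in>X \<times> Y. \<bar>dist (fst p) (g (snd p)) - dist (f (fst p)) (snd p)\<bar>)"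

definition dGH :: "'a::metric_space set \<Rightarrow> 'b::metric_space set \<Rightarrow> real" where
  "dGH X Y = (1/2) * (INF p\<in>{(f, g). f ` X \<subseteq> Y \<and> g ` Y \<subseteq> X}.
      max (dis (fst p) X) (max (dis (snd p) Y) (codis (fst p) (snd p) X Y)))"

definition dGH_hat :: "'a::metric_space set \<Rightarrow> 'b::metric_space set \<Rightarrow> real" where
  "dGH_hat X Y = (1/2) * max (INF f\<in>{f. f ` X \<subseteq> Y}. dis f X) (INF g\<in>{g. g ` Y \<subseteq> X}. dis g Y)"

fun Xseq :: "('a \<Rightarrow> 'b) \<Rightarrow> ('b \<Rightarrow> 'a) \<Rightarrow> 'a set \<Rightarrow> 'b set \<Rightarrow> nat \<Rightarrow> 'a set" where
  "Xseq f g Xe Ye 0 = Xe"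
| "Xseq f g Xe Ye (Suc 0) = g ` Ye"
| "Xseq f g Xe Ye (Suc (Suc k)) = (g \<circ> f) ` Xseq f g Xe Ye k"

end

theory Submission
  imports Defs
begin

definition ghc :: "'a::metric_space set \<Rightarrow> 'b::metric_space set \<Rightarrow> real \<Rightarrow> real \<Rightarrow> real \<Rightarrow> bool" where
  "ghc A B a b c \<longleftrightarrow> (\<forall>\<eta>>0. \<exists>F G. F ` A \<subseteq> B \<and> G ` B \<subseteq> A
     \<and> (\<forall>x\<in>A. \<forall>x'\<in>A. \<bar>dist x x' - dist (F x) (F x')\<bar> \<le> a + \<eta>)
     \<and> (\<forall>y\<in>B. \<forall>y'\<in>B. \<bar>dist y y' - dist (G y) (G y')\<bar> \<le> b + \<eta>)
     \<and> (\<forall>x\<in>A. \<forall>y\<in>B. \<bar>dist x (G y) - dist (F x) y\<bar> \<le> c + \<eta>))"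

lemma dist4: "\<bar>dist (a::'a::metric_space) b - dist c d\<bar> \<le> dist a c + dist b d"
proof -
  have "dist a b \<le> dist a c + dist c d + dist d b"
    by (metis add.commute add_le_cancel_left dist_triangle order_trans dist_commute dist_triangle2)
  moreover have "dist c d \<le> dist c a + dist a b + dist b d"
    by (metis add.commute add_le_cancel_left dist_triangle order_trans dist_commute dist_triangle2)
  ultimately show ?thesis by (simp add: dist_commute abs_le_iff)
qed

lemma ghc_trans:
  assumes "ghc A B a1 b1 c1" "ghc B C a2 b2 c2"
    and "a = a1 + a2" "b = b1 + b2" "c = c1 + c2"
  shows "ghc A C a b c"
  unfolding ghc_def
proof (intro allI impI)
  fix \<eta> :: real assume "\<eta> > 0"
  then have h: "\<eta>/2 > 0" by simp
  from assms(1)[unfolded ghc_def, rule_format, OF h] obtain F1 G1 where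
    1: "F1 ` A \<subseteq> B" "G1 ` B \<subseteq> A"
     "\<forall>x\<in>A. \<forall>x'\<in>A. \<bar>dist x x' - dist (F1 x) (F1 x')\<bar> \<le> a1 + \<eta>/2"
     "\<forall>y\<in>B. \<forall>y'\<in>B. \<bar>dist y y' - dist (G1 y) (G1 y')\<bar> \<le> b1 + \<eta>/2"
     "\<forall>x\<in>A. \<forall>y\<in>B. \<bar>dist x (G1 y) - dist (F1 x) y\<bar> \<le> c1 + \<eta>/2" by blast
  from assms(2)[unfolded ghc_def, rule_format, OF h] obtain F2 G2 where
    2: "F2 ` B \<subseteq> C" "G2 ` C \<subseteq> B"
     "\<forall>x\<in>B. \<forall>x'\<in>B. \<bar>dist x x' - dist (F2 x) (F2 x')\<bar> \<le> a2 + \<eta>/2"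
     "\<forall>y\<in>C. \<forall>y'\<in>C. \<bar>dist y y' - dist (G2 y) (G2 y')\<bar> \<le> b2 + \<eta>/2"
     "\<forall>x\<in>B. \<forall>y\<in>C. \<bar>dist x (G2 y) - dist (F2 x) y\<bar> \<le> c2 + \<eta>/2" by blast
  show "\<exists>F G. F ` A \<subseteq> C \<and> G ` C \<subseteq> A
     \<and> (\<forall>x\<in>A. \<forall>x'\<in>A. \<bar>dist x x' - dist (F x) (F x')\<bar> \<le> a + \<eta>)
     \<and> (\<forall>y\<in>C. \<forall>y'\<in>C. \<bar>dist y y' - dist (G y) (G y')\<bar> \<le> b + \<eta>)
     \<and> (\<forall>x\<in>A. \<forall>y\<in>C. \<bar>dist x (G y) - dist (F x) y\<bar> \<le> c + \<eta>)"
  proof (intro exI conjI ballI)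
    show "(F2 \<circ> F1) ` A \<subseteq> C" using 1(1) 2(1) by (auto simp: image_subset_iff)
    show "(G1 \<circ> G2) ` C \<subseteq> A" using 1(2) 2(2) by (auto simp: image_subset_iff)
  next
    fix x x' assume x: "x \<in> A" "x' \<in> A"
    then have "F1 x \<in> B" "F1 x' \<in> B" using 1 by auto
    then have "\<bar>dist (F1 x) (F1 x') - dist (F2 (F1 x)) (F2 (F1 x'))\<bar> \<le> a2 + \<eta>/2" using 2 by blast
    moreover have "\<bar>dist x x' - dist (F1 x) (F1 x')\<bar> \<le> a1 + \<eta>/2" using 1 x by blast
    ultimately show "\<bar>dist x x' - dist ((F2 \<circ> F1) x) ((F2 \<circ> F1) x')\<bar> \<le> a + \<eta>"
      using assms(3) by (simp add: abs_le_iff)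
  next
    fix y y' assume y: "y \<in> C" "y' \<in> C"
    then have "G2 y \<in> B" "G2 y' \<in> B" using 2 by auto
    then have "\<bar>dist (G2 y) (G2 y') - dist (G1 (G2 y)) (G1 (G2 y'))\<bar> \<le> b1 + \<eta>/2" using 1 by blast
    moreover have "\<bar>dist y y' - dist (G2 y) (G2 y')\<bar> \<le> b2 + \<eta>/2" using 2 y by blast
    ultimately show "\<bar>dist y y' - dist ((G1 \<circ> G2) y) ((G1 \<circ> G2) y')\<bar> \<le> b + \<eta>"
      using assms(4) by (simp add: abs_le_iff)
  next
    fix x y assume xy: "x \<in> A" "y \<in> C"
    then have "F1 x \<in> B" "G2 y \<in> B" using 1 2 by auto
    then have "\<bar>dist x (G1 (G2 y)) - dist (F1 x) (G2 y)\<bar> \<le> c1 + \<eta>/2" using 1 xy by blast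
    moreover have "\<bar>dist (F1 x) (G2 y) - dist (F2 (F1 x)) y\<bar> \<le> c2 + \<eta>/2" using 2 xy \<open>F1 x \<in> B\<close> by blast
    ultimately show "\<bar>dist x ((G1 \<circ> G2) y) - dist ((F2 \<circ> F1) x) y\<bar> \<le> c + \<eta>"
      using assms(5) by (simp add: abs_le_iff)
  qed
qed

lemma ghc_sym:
  assumes "ghc A B a b c" shows "ghc B A b a c"
  unfolding ghc_def
proof (intro allI impI)
  fix \<eta> :: real assume h: "\<eta> > 0"
  from assms[unfolded ghc_def, rule_format, OF h] obtain F G where
    1: "F ` A \<subseteq> B" "G ` B \<subseteq> A"
     "\<forall>x\<in>A. \<forall>x'\<in>A. \<bar>dist x x' - dist (F x) (F x')\<bar> \<le> a + \<eta>"
     "\<forall>y\<in>B. \<forall>y'\<in>B. \<bar>dist y y' - dist (G y) (G y')\<bar> \<le> b + \<eta>"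
     "\<forall>x\<in>A. \<forall>y\<in>B. \<bar>dist x (G y) - dist (F x) y\<bar> \<le> c + \<eta>" by blast
  show "\<exists>F G. F ` B \<subseteq> A \<and> G ` A \<subseteq> B
     \<and> (\<forall>x\<in>B. \<forall>x'\<in>B. \<bar>dist x x' - dist (F x) (F x')\<bar> \<le> b + \<eta>)
     \<and> (\<forall>y\<in>A. \<forall>y'\<in>A. \<bar>dist y y' - dist (G y) (G y')\<bar> \<le> a + \<eta>)
     \<and> (\<forall>x\<in>B. \<forall>y\<in>A. \<bar>dist x (G y) - dist (F x) y\<bar> \<le> c + \<eta>)"
  proof (intro exI conjI ballI)
    fix x y assume "x \<in> B" "y \<in> A"
    then have "\<bar>dist y (G x) - dist (F y) x\<bar> \<le> c + \<eta>" using 1 by blast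
    then show "\<bar>dist x (F y) - dist (G x) y\<bar> \<le> c + \<eta>" by (simp add: dist_commute abs_minus_commute)
  qed (use 1 in auto)
qed

lemma ghc_refl: "ghc A A 0 0 0"
  unfolding ghc_def by (intro allI impI exI[of _ id]) auto

lemma ghc_surj:
  assumes "\<phi> ` A = B" "\<forall>x\<in>A. \<forall>x'\<in>A. \<bar>dist x x' - dist (\<phi> x) (\<phi> x')\<bar> \<le> c"
  shows "ghc A B c c c"
  unfolding ghc_def
proof (intro allI impI)
  fix \<eta> :: real assume h: "\<eta> > 0"
  define \<psi> where "\<psi> = inv_into A \<phi>"
  have p1: "\<psi> y \<in> A" and p2: "\<phi> (\<psi> y) = y" if "y \<in> B" for y
    using that assms(1) unfolding \<psi>_def by (auto intro: inv_into_into f_inv_into_f)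
  show "\<exists>F G. F ` A \<subseteq> B \<and> G ` B \<subseteq> A
     \<and> (\<forall>x\<in>A. \<forall>x'\<in>A. \<bar>dist x x' - dist (F x) (F x')\<bar> \<le> c + \<eta>)
     \<and> (\<forall>y\<in>B. \<forall>y'\<in>B. \<bar>dist y y' - dist (G y) (G y')\<bar> \<le> c + \<eta>)
     \<and> (\<forall>x\<in>A. \<forall>y\<in>B. \<bar>dist x (G y) - dist (F x) y\<bar> \<le> c + \<eta>)"
  proof (intro exI conjI ballI)
    show "\<phi> ` A \<subseteq> B" using assms by auto
    show "\<psi> ` B \<subseteq> A" using p1 by auto
  next
    fix x x' assume "x \<in> A" "x' \<in> A"
    then show "\<bar>dist x x' - dist (\<phi> x) (\<phi> x')\<bar> \<le> c + \<eta>" using assms(2) h by force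
  next
    fix y y' assume y: "y \<in> B" "y' \<in> B"
    have "\<bar>dist (\<psi> y) (\<psi> y') - dist (\<phi> (\<psi> y)) (\<phi> (\<psi> y'))\<bar> \<le> c" using assms(2) p1 y by blast
    then show "\<bar>dist y y' - dist (\<psi> y) (\<psi> y')\<bar> \<le> c + \<eta>" using p2 y h by (simp add: abs_minus_commute)
  next
    fix x y assume xy: "x \<in> A" "y \<in> B"
    have "\<bar>dist x (\<psi> y) - dist (\<phi> x) (\<phi> (\<psi> y))\<bar> \<le> c" using assms(2) p1 xy by blast
    then show "\<bar>dist x (\<psi> y) - dist (\<phi> x) y\<bar> \<le> c + \<eta>" using p2 xy h by simp
  qed
qed

lemma net_proj:
  assumes "is_eps_net \<epsilon> X N" "x \<in> X"
  shows "(SOME n. n \<in> N \<and> dist x n \<le> \<epsilon>) \<in> N \<and> dist x (SOME n. n \<in> N \<and> dist x n \<le> \<epsilon>) \<le> \<epsilon>"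
proof -
  have "\<exists>n. n \<in> N \<and> dist x n \<le> \<epsilon>" using assms unfolding is_eps_net_def by blast
  then show ?thesis by (rule someI_ex)
qed

lemma ghc_net:
  assumes "is_eps_net \<epsilon> X N"
  shows "ghc X N (2*\<epsilon>) 0 \<epsilon>"
  unfolding ghc_def
proof (intro allI impI)
  fix \<eta> :: real assume h: "\<eta> > 0"
  define \<pi> where "\<pi> x = (SOME n. n \<in> N \<and> dist x n \<le> \<epsilon>)" for x
  have p: "\<pi> x \<in> N" "dist x (\<pi> x) \<le> \<epsilon>" if "x \<in> X" for x
    using net_proj[OF assms that] unfolding \<pi>_def by auto
  have NX: "N \<subseteq> X" using assms unfolding is_eps_net_def by auto
  have c1: "\<pi> ` X \<subseteq> N" using p by auto
  have c2: "id ` N \<subseteq> X" using NX by auto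
  have c3: "\<forall>x\<in>X. \<forall>x'\<in>X. \<bar>dist x x' - dist (\<pi> x) (\<pi> x')\<bar> \<le> 2*\<epsilon> + \<eta>"
  proof (intro ballI)
    fix x x' assume x: "x \<in> X" "x' \<in> X"
    have "\<bar>dist x x' - dist (\<pi> x) (\<pi> x')\<bar> \<le> dist x (\<pi> x) + dist x' (\<pi> x')" by (rule dist4)
    then show "\<bar>dist x x' - dist (\<pi> x) (\<pi> x')\<bar> \<le> 2*\<epsilon> + \<eta>"
      using p(2)[OF x(1)] p(2)[OF x(2)] h by linarith
  qed
  have c4: "\<forall>y\<in>N. \<forall>y'\<in>N. \<bar>dist y y' - dist (id y) (id y')\<bar> \<le> 0 + \<eta>" using h by simp
  have c5: "\<forall>x\<in>X. \<forall>y\<in>N. \<bar>dist x (id y) - dist (\<pi> x) y\<bar> \<le> \<epsilon> + \<eta>"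
  proof (intro ballI)
    fix x y assume xy: "x \<in> X" "y \<in> N"
    have "\<bar>dist x y - dist (\<pi> x) y\<bar> \<le> dist x (\<pi> x) + dist y y" by (rule dist4)
    then show "\<bar>dist x (id y) - dist (\<pi> x) y\<bar> \<le> \<epsilon> + \<eta>"
      using p(2)[OF xy(1)] h by simp
  qed
  show "\<exists>F G. F ` X \<subseteq> N \<and> G ` N \<subseteq> X \<and> (\<forall>x\<in>X. \<forall>x'\<in>X. \<bar>dist x x' - dist (F x) (F x')\<bar> \<le> 2*\<epsilon> + \<eta>) \<and> (\<forall>y\<in>N. \<forall>y'\<in>N. \<bar>dist y y' - dist (G y) (G y')\<bar> \<le> 0 + \<eta>) \<and> (\<forall>x\<in>X. \<forall>y\<in>N. \<bar>dist x (G y) - dist (F x) y\<bar> \<le> \<epsilon> + \<eta>)"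
    using c1 c2 c3 c4 c5 by blast
qed


lemma dis_upper:
  assumes "bdd_above ((\<lambda>p. \<bar>dist (fst p) (snd p) - dist (F (fst p)) (F (snd p))\<bar>) ` (A\<times>A))" "x\<in>A" "x'\<in>A"
  shows "\<bar>dist x x' - dist (F x) (F x')\<bar> \<le> dis F A"
  unfolding dis_def using cSUP_upper[OF _ assms(1), of "(x,x')"] assms by auto

lemma codis_upper:
  assumes "bdd_above ((\<lambda>p. \<bar>dist (fst p) (G (snd p)) - dist (F (fst p)) (snd p)\<bar>) ` (A\<times>B))" "x\<in>A" "y\<in>B"
  shows "\<bar>dist x (G y) - dist (F x) y\<bar> \<le> codis F G A B"
  unfolding codis_def using cSUP_upper[OF _ assms(1), of "(x,y)"] assms by auto

lemma bdd_fin: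
  assumes "finite A"
  shows "bdd_above ((\<lambda>p. \<bar>dist (fst p) (snd p) - dist (F (fst p)) (F (snd p))\<bar>) ` (A\<times>A))"
  using assms by (intro bdd_above_finite) auto

lemma bdd_bnd:
  assumes "bounded A" "bounded B" "F ` A \<subseteq> B"
  shows "bdd_above ((\<lambda>p. \<bar>dist (fst p) (snd p) - dist (F (fst p)) (F (snd p))\<bar>) ` (A\<times>A))"
proof -
  obtain e1 where e1: "\<forall>x\<in>A. \<forall>y\<in>A. dist x y \<le> e1" using assms(1) bounded_two_points by blast
  obtain e2 where e2: "\<forall>x\<in>B. \<forall>y\<in>B. dist x y \<le> e2" using assms(2) bounded_two_points by blast
  show ?thesis
  proof (rule bdd_aboveI2[where M="e1+e2"])
    fix p assume "p \<in> A \<times> A"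
    then have "dist (fst p) (snd p) \<le> e1" "dist (F (fst p)) (F (snd p)) \<le> e2"
      using e1 e2 assms(3) by (auto simp: mem_Times_iff image_subset_iff)
    moreover have "0 \<le> dist (fst p) (snd p)" "0 \<le> dist (F (fst p)) (F (snd p))" by auto
    ultimately show "\<bar>dist (fst p) (snd p) - dist (F (fst p)) (F (snd p))\<bar> \<le> e1 + e2" by linarith
  qed
qed

lemma dis_nonneg:
  assumes "bdd_above ((\<lambda>p. \<bar>dist (fst p) (snd p) - dist (F (fst p)) (F (snd p))\<bar>) ` (A\<times>A))" "A \<noteq> {}"
  shows "0 \<le> dis F A"
proof -
  obtain a where "a \<in> A" using assms(2) by blast
  from dis_upper[OF assms(1) this this] show ?thesis by simp
qed

lemma ghc_to_dGH:
  assumes "A \<noteq> {}" "B \<noteq> {}" "bounded A" "bounded B" "ghc A B a b c"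
  shows "dGH A B \<le> max a (max b c) / 2"
proof -
  let ?P = "{(f, g). f ` A \<subseteq> B \<and> g ` B \<subseteq> A}"
  let ?M = "\<lambda>p. max (dis (fst p) A) (max (dis (snd p) B) (codis (fst p) (snd p) A B))"
  have bdd: "bdd_below (?M ` ?P)"
  proof (rule bdd_belowI2[where m=0])
    fix p assume "p \<in> ?P"
    then have "fst p ` A \<subseteq> B" by auto
    from dis_nonneg[OF bdd_bnd[OF assms(3,4) this] assms(1)]
    have "0 \<le> dis (fst p) A" .
    then show "0 \<le> ?M p" by simp
  qed
  have "Inf (?M ` ?P) \<le> max a (max b c)"
  proof (rule field_le_epsilon)
    fix \<eta> :: real assume h: "\<eta> > 0"
    from assms(5)[unfolded ghc_def, rule_format, OF h] obtain F G where
      1: "F ` A \<subseteq> B" "G ` B \<subseteq> A"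
       "\<forall>x\<in>A. \<forall>x'\<in>A. \<bar>dist x x' - dist (F x) (F x')\<bar> \<le> a + \<eta>"
       "\<forall>y\<in>B. \<forall>y'\<in>B. \<bar>dist y y' - dist (G y) (G y')\<bar> \<le> b + \<eta>"
       "\<forall>x\<in>A. \<forall>y\<in>B. \<bar>dist x (G y) - dist (F x) y\<bar> \<le> c + \<eta>" by blast
    have d1: "dis F A \<le> a + \<eta>" unfolding dis_def
      by (rule cSUP_least) (use assms(1) 1(3) in auto)
    have d2: "dis G B \<le> b + \<eta>" unfolding dis_def
      by (rule cSUP_least) (use assms(2) 1(4) in auto)
    have d3: "codis F G A B \<le> c + \<eta>" unfolding codis_def
      by (rule cSUP_least) (use assms(1,2) 1(5) in auto)
    have "?M (F,G) \<le> max a (max b c) + \<eta>" using d1 d2 d3 by auto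
    moreover have "(F,G) \<in> ?P" using 1 by auto
    ultimately show "Inf (?M ` ?P) \<le> max a (max b c) + \<eta>"
      using cINF_lower2[OF bdd] by blast
  qed
  then show ?thesis unfolding dGH_def by simp
qed

lemma dGH_to_ghc:
  assumes "finite A" "finite B" "A \<noteq> {}" "B \<noteq> {}" "dGH A B \<le> \<delta>"
  shows "ghc A B (2*\<delta>) (2*\<delta>) (2*\<delta>)"
  unfolding ghc_def
proof (intro allI impI)
  fix \<eta> :: real assume h: "\<eta> > 0"
  let ?P = "{(f, g). f ` A \<subseteq> B \<and> g ` B \<subseteq> A}"
  let ?M = "\<lambda>p. max (dis (fst p) A) (max (dis (snd p) B) (codis (fst p) (snd p) A B))"
  obtain a0 b0 where "a0 \<in> A" "b0 \<in> B" using assms by blast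
  then have "((\<lambda>_. b0), (\<lambda>_. a0)) \<in> ?P" by auto
  then have ne: "?M ` ?P \<noteq> {}" by blast
  have "Inf (?M ` ?P) < 2*\<delta> + \<eta>" using assms(5) h unfolding dGH_def by simp
  from cInf_lessD[OF ne this] obtain p where p: "p \<in> ?P" "?M p < 2*\<delta> + \<eta>" by blast
  obtain F G where FG: "p = (F, G)" by (cases p)
  have 1: "F ` A \<subseteq> B" "G ` B \<subseteq> A" using p FG by auto
  have m: "dis F A < 2*\<delta> + \<eta>" "dis G B < 2*\<delta> + \<eta>" "codis F G A B < 2*\<delta> + \<eta>"
    using p(2) FG by auto
  have c3: "\<forall>x\<in>A. \<forall>x'\<in>A. \<bar>dist x x' - dist (F x) (F x')\<bar> \<le> 2*\<delta> + \<eta>"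
  proof (intro ballI)
    fix x x' assume "x \<in> A" "x' \<in> A"
    from dis_upper[OF bdd_fin[OF assms(1)] this, of F] m(1)
    show "\<bar>dist x x' - dist (F x) (F x')\<bar> \<le> 2*\<delta> + \<eta>" by linarith
  qed
  have c4: "\<forall>y\<in>B. \<forall>y'\<in>B. \<bar>dist y y' - dist (G y) (G y')\<bar> \<le> 2*\<delta> + \<eta>"
  proof (intro ballI)
    fix x x' assume "x \<in> B" "x' \<in> B"
    from dis_upper[OF bdd_fin[OF assms(2)] this, of G] m(2)
    show "\<bar>dist x x' - dist (G x) (G x')\<bar> \<le> 2*\<delta> + \<eta>" by linarith
  qed
  have bc: "bdd_above ((\<lambda>p. \<bar>dist (fst p) (G (snd p)) - dist (F (fst p)) (snd p)\<bar>) ` (A\<times>B))"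
    using assms(1,2) by (intro bdd_above_finite) auto
  have c5: "\<forall>x\<in>A. \<forall>y\<in>B. \<bar>dist x (G y) - dist (F x) y\<bar> \<le> 2*\<delta> + \<eta>"
  proof (intro ballI)
    fix x y assume "x \<in> A" "y \<in> B"
    from codis_upper[OF bc this] m(3)
    show "\<bar>dist x (G y) - dist (F x) y\<bar> \<le> 2*\<delta> + \<eta>" by linarith
  qed
  show "\<exists>F G. F ` A \<subseteq> B \<and> G ` B \<subseteq> A
     \<and> (\<forall>x\<in>A. \<forall>x'\<in>A. \<bar>dist x x' - dist (F x) (F x')\<bar> \<le> 2*\<delta> + \<eta>)
     \<and> (\<forall>y\<in>B. \<forall>y'\<in>B. \<bar>dist y y' - dist (G y) (G y')\<bar> \<le> 2*\<delta> + \<eta>)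
     \<and> (\<forall>x\<in>A. \<forall>y\<in>B. \<bar>dist x (G y) - dist (F x) y\<bar> \<le> 2*\<delta> + \<eta>)"
    using 1 c3 c4 c5 by blast
qed

lemma hat_part:
  fixes X :: "'a::metric_space set" and Y :: "'b::metric_space set"
  assumes "compact X" "compact Y" "Y \<noteq> {}" "Xe \<subseteq> X" "finite Xe" "Xe \<noteq> {}"
    "is_eps_net \<epsilon> Y Ye"
  shows "(INF f\<in>{f. f ` Xe \<subseteq> Ye}. dis f Xe) \<le> (INF f\<in>{f. f ` X \<subseteq> Y}. dis f X) + 2*\<epsilon>"
proof (rule field_le_epsilon)
  fix \<eta> :: real assume h: "\<eta> > 0"
  obtain y0 where "y0 \<in> Y" using assms(3) by blast
  then have "(\<lambda>_. y0) \<in> {f. f ` X \<subseteq> Y}" by auto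
  then have ne: "(\<lambda>f. dis f X) ` {f. f ` X \<subseteq> Y} \<noteq> {}" by blast
  have "Inf ((\<lambda>f. dis f X) ` {f. f ` X \<subseteq> Y}) < (INF f\<in>{f. f ` X \<subseteq> Y}. dis f X) + \<eta>" using h by simp
  from cInf_lessD[OF ne this] obtain \<phi> where
    \<phi>: "\<phi> ` X \<subseteq> Y" "dis \<phi> X < (INF f\<in>{f. f ` X \<subseteq> Y}. dis f X) + \<eta>" by auto
  define \<pi> where "\<pi> y = (SOME n. n \<in> Ye \<and> dist y n \<le> \<epsilon>)" for y
  have p: "\<pi> y \<in> Ye" "dist y (\<pi> y) \<le> \<epsilon>" if "y \<in> Y" for y
    using net_proj[OF assms(7) that] unfolding \<pi>_def by auto
  have bX: "bdd_above ((\<lambda>p. \<bar>dist (fst p) (snd p) - dist (\<phi> (fst p)) (\<phi> (snd p))\<bar>) ` (X\<times>X))"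
    using bdd_bnd[OF compact_imp_bounded[OF assms(1)] compact_imp_bounded[OF assms(2)] \<phi>(1)] .
  have d: "dis (\<pi> \<circ> \<phi>) Xe \<le> dis \<phi> X + 2*\<epsilon>"
    unfolding dis_def[of "\<pi> \<circ> \<phi>"]
  proof (rule cSUP_least)
    show "Xe \<times> Xe \<noteq> {}" using assms(6) by auto
  next
    fix q assume "q \<in> Xe \<times> Xe"
    then obtain x x' where q: "q = (x, x')" "x \<in> X" "x' \<in> X" using assms(4) by auto
    have 1: "\<bar>dist x x' - dist (\<phi> x) (\<phi> x')\<bar> \<le> dis \<phi> X" using dis_upper[OF bX q(2,3)] .
    have 2: "\<bar>dist (\<phi> x) (\<phi> x') - dist (\<pi> (\<phi> x)) (\<pi> (\<phi> x'))\<bar> \<le> dist (\<phi> x) (\<pi> (\<phi> x)) + dist (\<phi> x') (\<pi> (\<phi> x'))"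
      by (rule dist4)
    have 3: "dist (\<phi> x) (\<pi> (\<phi> x)) \<le> \<epsilon>" "dist (\<phi> x') (\<pi> (\<phi> x')) \<le> \<epsilon>"
      using p \<phi>(1) q by auto
    show "\<bar>dist (fst q) (snd q) - dist ((\<pi> \<circ> \<phi>) (fst q)) ((\<pi> \<circ> \<phi>) (snd q))\<bar> \<le> dis \<phi> X + 2*\<epsilon>"
      using 1 2 3 q(1) by (simp add: abs_le_iff)
  qed
  have mem: "\<pi> \<circ> \<phi> \<in> {f. f ` Xe \<subseteq> Ye}" using p(1) \<phi>(1) assms(4) by (auto simp: image_subset_iff subset_iff)
  have bb: "bdd_below ((\<lambda>f. dis f Xe) ` {f. f ` Xe \<subseteq> Ye})"
  proof (rule bdd_belowI2[where m=0])
    fix f :: "'a \<Rightarrow> 'b" 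
    show "0 \<le> dis f Xe" by (rule dis_nonneg[OF bdd_fin[OF assms(5)] assms(6)])
  qed
  have "(INF f\<in>{f. f ` Xe \<subseteq> Ye}. dis f Xe) \<le> dis (\<pi> \<circ> \<phi>) Xe" by (rule cINF_lower[OF bb mem])
  then show "(INF f\<in>{f. f ` Xe \<subseteq> Ye}. dis f Xe) \<le> (INF f\<in>{f. f ` X \<subseteq> Y}. dis f X) + 2*\<epsilon> + \<eta>"
    using d \<phi>(2) by linarith
qed

lemma hat_bound:
  fixes X :: "'a::metric_space set" and Y :: "'b::metric_space set"
  assumes "compact X" "compact Y" "X \<noteq> {}" "Y \<noteq> {}"
    "finite Xe" "is_eps_net \<epsilon> X Xe" "finite Ye" "is_eps_net \<epsilon> Y Ye"
  shows "dGH_hat Xe Ye \<le> dGH_hat X Y + \<epsilon>"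
proof -
  have s: "Xe \<subseteq> X" "Ye \<subseteq> Y" using assms unfolding is_eps_net_def by auto
  have "Xe \<noteq> {}" "Ye \<noteq> {}" using assms(3,4,6,8) unfolding is_eps_net_def by auto
  then have 1: "(INF f\<in>{f. f ` Xe \<subseteq> Ye}. dis f Xe) \<le> (INF f\<in>{f. f ` X \<subseteq> Y}. dis f X) + 2*\<epsilon>"
   and 2: "(INF f\<in>{f. f ` Ye \<subseteq> Xe}. dis f Ye) \<le> (INF f\<in>{f. f ` Y \<subseteq> X}. dis f Y) + 2*\<epsilon>"
    using hat_part[OF assms(1,2,4) s(1) assms(5) _ assms(8)] hat_part[OF assms(2,1,3) s(2) assms(7) _ assms(6)]
    by auto
  show ?thesis unfolding dGH_hat_def using 1 2 by (simp add: max_def)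
qed


lemma nat_cases3:
  obtains "n = 0" | "n = Suc 0" | k where "n = Suc (Suc k)"
  by (metis not0_implies_Suc)

lemma Xseq_sub:
  assumes "f ` Xe \<subseteq> Ye" "g ` Ye \<subseteq> Xe" shows "Xseq f g Xe Ye j \<subseteq> Xe"
proof (induction j rule: less_induct)
  case (less n)
  show ?case
  proof (cases n rule: nat_cases3)
    case 1 then show ?thesis by simp
  next
    case 2 then show ?thesis using assms(2) by simp
  next
    case (3 k)
    then have "Xseq f g Xe Ye k \<subseteq> Xe" using less by simp
    then have "f ` Xseq f g Xe Ye k \<subseteq> Ye" using assms(1) by blast
    then have "g ` f ` Xseq f g Xe Ye k \<subseteq> Xe" using assms(2) by blast
    then show ?thesis using 3 by (simp add: image_comp)
  qed
qed

lemma Xseq_fin: "finite Xe \<Longrightarrow> finite Ye \<Longrightarrow> finite (Xseq f g Xe Ye j)"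
proof (induction j rule: less_induct)
  case (less n)
  then show ?case by (cases n rule: nat_cases3) auto
qed

lemma Xseq_ne: "Xe \<noteq> {} \<Longrightarrow> Ye \<noteq> {} \<Longrightarrow> Xseq f g Xe Ye j \<noteq> {}"
proof (induction j rule: less_induct)
  case (less n)
  then show ?case by (cases n rule: nat_cases3) auto
qed

theorem claim3:
  fixes X :: "'a::metric_space set" and Y :: "'b::metric_space set"
    and Xe :: "'a set" and Ye :: "'b set"
    and f :: "'a \<Rightarrow> 'b" and g :: "'b \<Rightarrow> 'a"
    and \<epsilon> \<delta> :: real and k :: nat
  assumes "compact X" "compact Y" "X \<noteq> {}" "Y \<noteq> {}"
    and "\<epsilon> \<ge> 0"
    and "finite Xe" "is_eps_net \<epsilon> X Xe"
    and "finite Ye" "is_eps_net \<epsilon> Y Ye"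
    and "f ` Xe \<subseteq> Ye" "g ` Ye \<subseteq> Xe"
    and "(1/2) * max (dis f Xe) (dis g Ye) = dGH_hat Xe Ye"
    and "\<delta> \<ge> 0"
    and "dGH (Xseq f g Xe Ye k) (Xseq f g Xe Ye (Suc k)) \<le> \<delta>"
  shows "dGH X Y \<le> (2 * real k + 1) * dGH_hat X Y + (2 * real k + 2) * \<epsilon> + \<delta>"
proof -
  define r where "r = dGH_hat Xe Ye"
  define XS where "XS j = Xseq f g Xe Ye j" for j
  have sX: "Xe \<subseteq> X" and sY: "Ye \<subseteq> Y" using assms(7,9) unfolding is_eps_net_def by auto
  have neX: "Xe \<noteq> {}" and neY: "Ye \<noteq> {}" using assms(3,4,7,9) unfolding is_eps_net_def by auto
  have mx: "max (dis f Xe) (dis g Ye) = 2*r" using assms(12) unfolding r_def by linarith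
  have df: "dis f Xe \<le> 2*r" "dis g Ye \<le> 2*r" using mx max.cobounded1 max.cobounded2 by metis+
  have pf: "\<bar>dist x x' - dist (f x) (f x')\<bar> \<le> 2*r" if "x \<in> Xe" "x' \<in> Xe" for x x'
  proof -
    have "\<bar>dist x x' - dist (f x) (f x')\<bar> \<le> dis f Xe" by (rule dis_upper[OF bdd_fin[OF assms(6)] that])
    then show ?thesis using df(1) by linarith
  qed
  have pg: "\<bar>dist y y' - dist (g y) (g y')\<bar> \<le> 2*r" if "y \<in> Ye" "y' \<in> Ye" for y y'
  proof -
    have "\<bar>dist y y' - dist (g y) (g y')\<bar> \<le> dis g Ye" by (rule dis_upper[OF bdd_fin[OF assms(8)] that])
    then show ?thesis using df(2) by linarith
  qed
  have pgf: "\<forall>x\<in>Xe. \<forall>x'\<in>Xe. \<bar>dist x x' - dist ((g \<circ> f) x) ((g \<circ> f) x')\<bar> \<le> 4*r"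
  proof (intro ballI)
    fix x x' assume x: "x \<in> Xe" "x' \<in> Xe"
    then have "f x \<in> Ye" "f x' \<in> Ye" using assms(10) by auto
    from pf[OF x] pg[OF this] show "\<bar>dist x x' - dist ((g \<circ> f) x) ((g \<circ> f) x')\<bar> \<le> 4*r"
      by (simp add: abs_le_iff)
  qed
  have sub: "XS j \<subseteq> Xe" for j unfolding XS_def by (rule Xseq_sub[OF assms(10,11)])
  have fin: "finite (XS j)" for j unfolding XS_def by (rule Xseq_fin[OF assms(6,8)])
  have ne: "XS j \<noteq> {}" for j unfolding XS_def by (rule Xseq_ne[OF neX neY])
  have step: "ghc (XS j) (XS (Suc (Suc j))) (4*r) (4*r) (4*r)" for j
  proof (rule ghc_surj)
    show "(g \<circ> f) ` XS j = XS (Suc (Suc j))" unfolding XS_def by simp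
    show "\<forall>x\<in>XS j. \<forall>x'\<in>XS j. \<bar>dist x x' - dist ((g \<circ> f) x) ((g \<circ> f) x')\<bar> \<le> 4*r"
      using pgf sub[of j] by blast
  qed
  have base1: "ghc Ye (XS (Suc 0)) (2*r) (2*r) (2*r)"
  proof (rule ghc_surj)
    show "g ` Ye = XS (Suc 0)" unfolding XS_def by simp
    show "\<forall>x\<in>Ye. \<forall>x'\<in>Ye. \<bar>dist x x' - dist (g x) (g x')\<bar> \<le> 2*r" using pg by blast
  qed
  have even: "ghc Xe (XS (2*j)) (4*r*j) (4*r*j) (4*r*j)" for j
  proof (induction j)
    case 0
    show ?case using ghc_refl[of Xe] unfolding XS_def by simp
  next
    case (Suc j)
    have e: "2 * Suc j = Suc (Suc (2*j))" by simp
    show ?case unfolding e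
      by (rule ghc_trans[OF Suc step[of "2*j"]]) (simp_all add: algebra_simps)
  qed
  have odd: "ghc Ye (XS (2*j+1)) (2*r*(2*j+1)) (2*r*(2*j+1)) (2*r*(2*j+1))" for j
  proof (induction j)
    case 0
    show ?case using base1 by simp
  next
    case (Suc j)
    have e: "2 * Suc j + 1 = Suc (Suc (2*j+1))" by simp
    show ?case unfolding e
      by (rule ghc_trans[OF Suc step[of "2*j+1"]]) (simp_all add: algebra_simps)
  qed
  have mid: "ghc (XS k) (XS (Suc k)) (2*\<delta>) (2*\<delta>) (2*\<delta>)"
    using dGH_to_ghc[OF fin fin ne ne] assms(14) unfolding XS_def by blast
  define m where "m = 2*r*(2*real k+1) + 2*\<delta>"
  have core: "ghc Xe Ye m m m"
  proof (cases "even k")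
    case True
    then obtain j where kj: "k = 2*j" by (rule evenE)
    have a: "ghc Xe (XS k) (2*r*k) (2*r*k) (2*r*k)" using even[of j] kj by (simp add: algebra_simps)
    have b: "ghc (XS (Suc k)) Ye (2*r*(k+1)) (2*r*(k+1)) (2*r*(k+1))"
      using ghc_sym[OF odd[of j]] kj by (simp add: algebra_simps)
    have c: "ghc Xe (XS (Suc k)) (2*r*k + 2*\<delta>) (2*r*k + 2*\<delta>) (2*r*k + 2*\<delta>)"
      by (rule ghc_trans[OF a mid]) simp_all
    show ?thesis by (rule ghc_trans[OF c b]) (simp_all add: m_def algebra_simps)
  next
    case False
    then obtain j where kj: "k = 2*j+1" using oddE by blast
    have a: "ghc Ye (XS k) (2*r*k) (2*r*k) (2*r*k)" using odd[of j] kj by (simp add: algebra_simps)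
    have b: "ghc (XS (Suc k)) Xe (2*r*(k+1)) (2*r*(k+1)) (2*r*(k+1))"
      using ghc_sym[OF even[of "Suc j"]] kj by (simp add: algebra_simps)
    have c: "ghc Ye (XS (Suc k)) (2*r*k + 2*\<delta>) (2*r*k + 2*\<delta>) (2*r*k + 2*\<delta>)"
      by (rule ghc_trans[OF a mid]) simp_all
    have "ghc Ye Xe m m m" by (rule ghc_trans[OF c b]) (simp_all add: m_def algebra_simps)
    then show ?thesis by (rule ghc_sym)
  qed
  have n1: "ghc X Xe (2*\<epsilon>) 0 \<epsilon>" by (rule ghc_net[OF assms(7)])
  have n2: "ghc Ye Y 0 (2*\<epsilon>) \<epsilon>" using ghc_sym[OF ghc_net[OF assms(9)]] .
  have t1: "ghc X Ye (2*\<epsilon> + m) m (\<epsilon> + m)" by (rule ghc_trans[OF n1 core]) simp_all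
  have t2: "ghc X Y (2*\<epsilon> + m) (m + 2*\<epsilon>) (\<epsilon> + m + \<epsilon>)" by (rule ghc_trans[OF t1 n2]) simp_all
  have "dGH X Y \<le> max (2*\<epsilon> + m) (max (m + 2*\<epsilon>) (\<epsilon> + m + \<epsilon>)) / 2"
    by (rule ghc_to_dGH[OF assms(3,4) compact_imp_bounded[OF assms(1)] compact_imp_bounded[OF assms(2)] t2])
  also have "\<dots> = r*(2*real k+1) + \<delta> + \<epsilon>" by (simp add: m_def algebra_simps)
  also have "\<dots> \<le> (dGH_hat X Y + \<epsilon>)*(2*real k+1) + \<delta> + \<epsilon>"
    using hat_bound[OF assms(1-4,6,7,8,9)] unfolding r_def
    by (intro add_right_mono mult_right_mono) auto
  also have "\<dots> = (2 * real k + 1) * dGH_hat X Y + (2 * real k + 2) * \<epsilon> + \<delta>"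
    by (simp add: algebra_simps)
  finally show ?thesis .
qed

end
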